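(* For every $p\in k(x)$ there exists a circuit $c_p\in\mathsf{ACirc}[0,1]$ with $[\![c_p]\!]=\{(\bullet,p)\}$.
   Context: Fix a field $k$; $k(x)$ is the field of fractions of polynomials in $x$ over $k$. Circuits: terms built from generators with sorts $(n,m)$: copier $\Delta:(1,2)$, discard $!:(1,0)$, amplifier $\mathsf{s}_r:(1,1)$ ($r\in k$), register $\mathsf{x}:(1,1)$, adder $+:(2,1)$, zero $0:(0,1)$, one $\mathbf{1}:(0,1)$; mirror images $\Delta^{op}:(2,1)$, $!^{op}:(0,1)$, $\mathsf{s}_r^{op}$, $\mathsf{x}^{op}:(1,1)$, $+^{op}:(1,2)$, $0^{op}:(1,0)$, $\mathbf{1}^{op}:(1,0)$; $\mathrm{id}_0:(0,0),\mathrm{id}_1:(1,1),\mathrm{sw}:(2,2)$; closed under sequential composition $;$ and parallel composition $\oplus$. $\mathsf{ACirc}[n,m]$ is the set of circuits of sort $(n,m)$. Denotation: $[\![\Delta]\!]=\{(p,(p,p))\}$, $[\![!]\!]=\{(p,\bullet)\}$, $[\![+]\!]=\{((p,q),p+q)\}$, $[\![0]\!]=\{(\bullet,0)\}$, $[\![\mathbf 1]\!]=\{(\bullet,1)\}$, $[\![\mathsf s_r]\!]=\{(p,rp)\}$, $[\![\mathsf x]\!]=\{(p,px)\}$ ($p,q\in k(x)$, $\bullet$ the unique element of $k(x)^0$); mirrored generators denote converse relations; $\mathrm{id}_1,\mathrm{sw},\mathrm{id}_0$ denote identity, swap, $\{(\bullet,\bullet)\}$; $;$ is relational composition and $\oplus$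 product of relations. *)

theory Defs
  imports "HOL-Computational_Algebra.Polynomial" "HOL-Computational_Algebra.Fraction_Field"
begin

type_synonym 'k ratfun = "'k poly fract"

definition ratfun_const :: "'k::field \<Rightarrow> 'k ratfun" where
  "ratfun_const r = Fract [:r:] 1"

definition ratfun_x :: "'k::field ratfun" where
  "ratfun_x = Fract [:0, 1:] 1"

datatype 'k circ =
    Copy | Discard | Amp 'k | Reg | Add | Zero | One
  | CopyOp | DiscardOp | AmpOp 'k | RegOp | AddOp | ZeroOp | OneOp
  | Id0 | Id1 | Sw
  | Seq "'k circ" "'k circ"
  | Par "'k circ" "'k circ"

inductive circ_sort :: "'k circ \<Rightarrow> nat \<Rightarrow> nat \<Rightarrow> bool" where
  "circ_sort Copy 1 2"
| "circ_sort Discard 1 0"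
| "circ_sort (Amp r) 1 1"
| "circ_sort Reg 1 1"
| "circ_sort Add 2 1"
| "circ_sort Zero 0 1"
| "circ_sort One 0 1"
| "circ_sort CopyOp 2 1"
| "circ_sort DiscardOp 0 1"
| "circ_sort (AmpOp r) 1 1"
| "circ_sort RegOp 1 1"
| "circ_sort AddOp 1 2"
| "circ_sort ZeroOp 1 0"
| "circ_sort OneOp 1 0"
| "circ_sort Id0 0 0"
| "circ_sort Id1 1 1"
| "circ_sort Sw 2 2"
| "circ_sort c n m \<Longrightarrow> circ_sort d m l \<Longrightarrow> circ_sort (Seq c d) n l"
| "circ_sort c n1 m1 \<Longrightarrow> circ_sort d n2 m2 \<Longrightarrow> circ_sort (Par c d) (n1 + n2) (m1 + m2)"

definition ACirc :: "nat \<Rightarrow> nat \<Rightarrow> 'k circ set" where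
  "ACirc n m = {c. circ_sort c n m}"

text \<open>Elements of k(x)^n are lists of length n; the empty list is the unique element of k(x)^0.\<close>

definition par_rel :: "('a list \<times> 'a list) set \<Rightarrow> ('a list \<times> 'a list) set \<Rightarrow> ('a list \<times> 'a list) set" where
  "par_rel R S = {(a @ c, b @ d) | a b c d. (a, b) \<in> R \<and> (c, d) \<in> S}"

fun sem_gen :: "'k::field circ \<Rightarrow> ('k ratfun list \<times> 'k ratfun list) set" where
  "sem_gen Copy = {([p], [p, p]) | p. True}"
| "sem_gen Discard = {([p], []) | p. True}"
| "sem_gen (Amp r) = {([p], [ratfun_const r * p]) | p. True}"
| "sem_gen Reg = {([p], [p * ratfun_x]) | p. True}"
| "sem_gen Add = {([p, q], [p + q]) | p q. True}"
| "sem_gen Zero = {([], [0])}"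
| "sem_gen One = {([], [1])}"
| "sem_gen _ = {}"

fun sem :: "'k::field circ \<Rightarrow> ('k ratfun list \<times> 'k ratfun list) set" where
  "sem CopyOp = converse (sem_gen Copy)"
| "sem DiscardOp = converse (sem_gen Discard)"
| "sem (AmpOp r) = converse (sem_gen (Amp r))"
| "sem RegOp = converse (sem_gen Reg)"
| "sem AddOp = converse (sem_gen Add)"
| "sem ZeroOp = converse (sem_gen Zero)"
| "sem OneOp = converse (sem_gen One)"
| "sem Id0 = {([], [])}"
| "sem Id1 = {([p], [p]) | p. True}"
| "sem Sw = {([p, q], [q, p]) | p q. True}"
| "sem (Seq c d) = sem c O sem d"
| "sem (Par c d) = par_rel (sem c) (sem d)"
| "sem c = sem_gen c"

end

theory Submission
  imports Defs
begin

lemma par_rel_11: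
  "par_rel {([x],[f x])|x. True} {([y],[g y])|y. True} = {([x,y],[f x, g y])|x y. True}"
proof (rule set_eqI, rule iffI)
  fix z assume "z \<in> par_rel {([x],[f x])|x. True} {([y],[g y])|y. True}"
  then show "z \<in> {([x,y],[f x, g y])|x y. True}" by (auto simp: par_rel_def)
next
  fix z assume "z \<in> {([x,y],[f x, g y])|x y. True}"
  then obtain x y where z: "z = ([x,y],[f x, g y])" by auto
  have "([x] @ [y], [f x] @ [g y]) \<in> par_rel {([x],[f x])|x. True} {([y],[g y])|y. True}"
    unfolding par_rel_def by blast
  then show "z \<in> par_rel {([x],[f x])|x. True} {([y],[g y])|y. True}" using z by simp
qed

lemma par_rel_01:
  "par_rel {([x],[f x])|x. True} {([],[c])} = {([x],[f x, c])|x. True}"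
proof (rule set_eqI, rule iffI)
  fix z assume "z \<in> par_rel {([x],[f x])|x. True} {([],[c])}"
  then show "z \<in> {([x],[f x, c])|x. True}" by (auto simp: par_rel_def)
next
  fix z assume "z \<in> {([x],[f x, c])|x. True}"
  then obtain x where z: "z = ([x],[f x, c])" by auto
  have "([x] @ [], [f x] @ [c]) \<in> par_rel {([x],[f x])|x. True} {([],[c])}"
    unfolding par_rel_def by blast
  then show "z \<in> par_rel {([x],[f x])|x. True} {([],[c])}" using z by simp
qed

lemma par_rel_10:
  "par_rel {([x],[f x])|x. True} {([c],[])} = {([x, c],[f x])|x. True}"
proof (rule set_eqI, rule iffI)
  fix z assume "z \<in> par_rel {([x],[f x])|x. True} {([c],[])}"
  then show "z \<in> {([x, c],[f x])|x. True}" by (auto simp: par_rel_def)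
next
  fix z assume "z \<in> {([x, c],[f x])|x. True}"
  then obtain x where z: "z = ([x, c],[f x])" by auto
  have "([x] @ [c], [f x] @ []) \<in> par_rel {([x],[f x])|x. True} {([c],[])}"
    unfolding par_rel_def by blast
  then show "z \<in> par_rel {([x],[f x])|x. True} {([c],[])}" using z by simp
qed

lemma Id1_fun: "sem Id1 = {([x],[(\<lambda>x. x) x])|x. True}" by simp

fun M :: "'k list \<Rightarrow> 'k circ" where
  "M [] = Seq Discard Zero"
| "M (a # as) = Seq Copy (Seq (Par (Amp a) (Seq Reg (M as))) Add)"

lemma M_sort: "circ_sort (M cs) 1 1"
proof (induction cs)
  case Nil
  have "circ_sort Discard 1 0" "circ_sort Zero 0 1" by (rule circ_sort.intros)+
  show ?case unfolding M.simps by (rule circ_sort.intros(18)[OF circ_sort.intros(2) circ_sort.intros(6)])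
next
  case (Cons a as)
  have "circ_sort (Seq Reg (M as)) 1 1"
    by (rule circ_sort.intros(18)[OF circ_sort.intros(4) Cons])
  then have "circ_sort (Par (Amp a) (Seq Reg (M as))) (1+1) (1+1)"
    by (rule circ_sort.intros(19)[OF circ_sort.intros(3)])
  then have "circ_sort (Par (Amp a) (Seq Reg (M as))) 2 2" by (simp add: numeral_2_eq_2)
  then have "circ_sort (Seq (Par (Amp a) (Seq Reg (M as))) Add) 2 1"
    by (rule circ_sort.intros(18)) (rule circ_sort.intros)
  then show ?case unfolding M.simps by (rule circ_sort.intros(18)[OF circ_sort.intros(1)])
qed

lemma poly_pCons_fract:
  "Fract (pCons a q) 1 = ratfun_const a + Fract q 1 * (ratfun_x :: 'k::field ratfun)"
proof -
  have "pCons a q = [:a:] + q * [:0, 1:]"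
    by (simp add: algebra_simps)
  then show ?thesis by (simp add: ratfun_const_def ratfun_x_def)
qed

lemma M_sem: "sem (M cs) = {([r], [Fract (Poly cs) 1 * r]) | r. True}"
proof (induction cs)
  case Nil
  show ?case by (auto simp: Zero_fract_def[symmetric])
next
  case (Cons a as)
  have e: "\<And>r. ratfun_const a * r + Fract (Poly as) 1 * (r * ratfun_x) = Fract (pCons a (Poly as)) 1 * r"
    by (simp add: poly_pCons_fract algebra_simps)
  have R: "sem (Seq Reg (M as)) = {([s], [Fract (Poly as) 1 * (s * ratfun_x)]) | s. True}"
    using Cons by auto
  have P: "par_rel (sem (Amp a)) (sem (Seq Reg (M as))) =
     {([r, s], [ratfun_const a * r, Fract (Poly as) 1 * (s * ratfun_x)]) | r s. True}"
  proof -
    have A: "sem (Amp a) = {([p],[ratfun_const a * p])|p. True}" by simp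
    show ?thesis unfolding A R by (rule par_rel_11)
  qed
  have Q: "sem (M (a#as)) = sem Copy O (sem (Par (Amp a) (Seq Reg (M as))) O sem Add)" by simp
  show ?case
    unfolding Q sem.simps(12) P
  proof (rule set_eqI, rule iffI)
    fix z assume "z \<in> sem Copy O ({([r, s], [ratfun_const a * r, Fract (Poly as) 1 * (s * ratfun_x)]) | r s. True} O sem Add)"
    then obtain r where "z = ([r], [ratfun_const a * r + Fract (Poly as) 1 * (r * ratfun_x)])" by auto
    then show "z \<in> {([r], [Fract (Poly (a # as)) 1 * r]) | r. True}" using e by simp
  next
    fix z assume "z \<in> {([r], [Fract (Poly (a # as)) 1 * r]) | r. True}"
    then obtain r where z: "z = ([r], [Fract (pCons a (Poly as)) 1 * r])" by auto
    have 1: "([r], [r, r]) \<in> sem Copy" by simp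
    have 2: "([r, r], [ratfun_const a * r, Fract (Poly as) 1 * (r * ratfun_x)]) \<in> {([r, s], [ratfun_const a * r, Fract (Poly as) 1 * (s * ratfun_x)]) | r s. True}" by simp
    have 3: "([ratfun_const a * r, Fract (Poly as) 1 * (r * ratfun_x)], [Fract (pCons a (Poly as)) 1 * r]) \<in> sem Add"
      using e[of r] by simp
    show "z \<in> sem Copy O ({([r, s], [ratfun_const a * r, Fract (Poly as) 1 * (s * ratfun_x)]) | r s. True} O sem Add)"
      unfolding z by (rule relcompI[OF 1 relcompI[OF 2 3]])
  qed
qed

definition X :: "'k::field poly \<Rightarrow> 'k circ" where
  "X a = Seq (Par Id1 (Seq One (Seq (M (coeffs a)) (Amp (-1))))) (Seq Add ZeroOp)"

lemma X_sort: "circ_sort (X a) 1 0"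
proof -
  have "circ_sort (Seq (M (coeffs a)) (Amp (-1))) 1 1"
    by (rule circ_sort.intros(18)[OF M_sort circ_sort.intros(3)])
  then have "circ_sort (Seq One (Seq (M (coeffs a)) (Amp (-1)))) 0 1"
    by (rule circ_sort.intros(18)[OF circ_sort.intros(7)])
  then have "circ_sort (Par Id1 (Seq One (Seq (M (coeffs a)) (Amp (-1))))) (1+0) (1+1)"
    by (rule circ_sort.intros(19)[OF circ_sort.intros(16)])
  then have a: "circ_sort (Par Id1 (Seq One (Seq (M (coeffs a)) (Amp (-1))))) 1 2" by (simp add: numeral_2_eq_2)
  have b: "circ_sort (Seq Add ZeroOp) 2 0"
    by (rule circ_sort.intros(18)[OF circ_sort.intros(5) circ_sort.intros(13)])
  show ?thesis unfolding X_def by (rule circ_sort.intros(18)[OF a b])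
qed

lemma X_sem: "sem (X a) = {([Fract a 1], [])}"
proof -
  have m1: "Fract [:-1:] 1 = - (1::'a ratfun)"
  proof -
    have "[:-1:] = - (1::'a poly)" by (simp add: one_pCons)
    then show ?thesis by (simp add: One_fract_def)
  qed
  have rc: "\<And>y. ratfun_const (-1) * y = - (y::'a ratfun)"
    unfolding ratfun_const_def m1 by simp
  have s1: "sem (Seq One (Seq (M (coeffs a)) (Amp (-1)))) = {([], [- Fract a 1])}"
  proof (rule set_eqI, rule iffI)
    fix z assume "z \<in> sem (Seq One (Seq (M (coeffs a)) (Amp (-1))))"
    then show "z \<in> {([], [- Fract a 1])}" by (auto simp: M_sem rc)
  next
    fix z :: "'a ratfun list \<times> 'a ratfun list"
    assume "z \<in> {([], [- Fract a 1])}"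
    then have z: "z = ([], [- Fract a 1])" by simp
    have 1: "([], [1]) \<in> sem One" by simp
    have 2: "([1], [Fract a 1]) \<in> sem (M (coeffs a))" by (simp add: M_sem)
    have 3: "([Fract a 1], [- Fract a 1]) \<in> sem (Amp (-1))" using rc by simp
    show "z \<in> sem (Seq One (Seq (M (coeffs a)) (Amp (-1))))"
      unfolding z sem.simps(11) by (rule relcompI[OF 1 relcompI[OF 2 3]])
  qed
  have s2: "sem (Par Id1 (Seq One (Seq (M (coeffs a)) (Amp (-1))))) = {([s], [s, - Fract a 1]) | s. True}"
    unfolding sem.simps(12) s1 Id1_fun by (rule par_rel_01)
  show ?thesis unfolding X_def sem.simps(11) s2
  proof (rule set_eqI, rule iffI)
    fix z :: "'a ratfun list \<times> 'a ratfun list"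
    assume "z \<in> {([s], [s, - Fract a 1]) | s. True} O (sem Add O sem ZeroOp)"
    then obtain s where "z = ([s], [])" "s + - Fract a 1 = 0" by auto
    then show "z \<in> {([Fract a 1], [])}" by (simp add: add_eq_0_iff2)
  next
    fix z :: "'a ratfun list \<times> 'a ratfun list"
    assume "z \<in> {([Fract a 1], [])}"
    then have z: "z = ([Fract a 1], [])" by simp
    have 1: "([Fract a 1], [Fract a 1, - Fract a 1]) \<in> {([s], [s, - Fract a 1]) | s. True}" by simp
    have 2: "([Fract a 1, - Fract a 1], [0]) \<in> sem Add" by (simp add: Zero_fract_def)
    have 3: "([0], []) \<in> sem ZeroOp" by simp
    show "z \<in> {([s], [s, - Fract a 1]) | s. True} O (sem Add O sem ZeroOp)"
      unfolding z by (rule relcompI[OF 1 relcompI[OF 2 3]])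
  qed
qed

definition D :: "'k::field poly \<Rightarrow> 'k poly \<Rightarrow> 'k circ" where
  "D a b = Seq DiscardOp (Seq Copy (Seq (Par Id1 (M (coeffs b))) (Par Id1 (X a))))"

lemma D_sort: "circ_sort (D a b) 0 1"
proof -
  have "circ_sort (Par Id1 (M (coeffs b))) (1+1) (1+1)"
    by (rule circ_sort.intros(19)[OF circ_sort.intros(16) M_sort])
  then have 1: "circ_sort (Par Id1 (M (coeffs b))) 2 2" by (simp add: numeral_2_eq_2)
  have "circ_sort (Par Id1 (X a)) (1+1) (1+0)"
    by (rule circ_sort.intros(19)[OF circ_sort.intros(16) X_sort])
  then have 2: "circ_sort (Par Id1 (X a)) 2 1" by (simp add: numeral_2_eq_2)
  have 3: "circ_sort (Seq (Par Id1 (M (coeffs b))) (Par Id1 (X a))) 2 1"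
    by (rule circ_sort.intros(18)[OF 1 2])
  have 4: "circ_sort (Seq Copy (Seq (Par Id1 (M (coeffs b))) (Par Id1 (X a)))) 1 1"
    by (rule circ_sort.intros(18)[OF circ_sort.intros(1) 3])
  show ?thesis unfolding D_def by (rule circ_sort.intros(18)[OF circ_sort.intros(9) 4])
qed

lemma D_sem:
  assumes "b \<noteq> 0"
  shows "sem (D a b) = {([], [Fract a b])}"
proof -
  have s1: "sem (Par Id1 (M (coeffs b))) = {([r, s], [r, Fract b 1 * s]) | r s. True}"
    unfolding sem.simps(12) M_sem Poly_coeffs Id1_fun by (rule par_rel_11)
  have s2: "sem (Par Id1 (X a)) = {([r, Fract a 1], [r]) | r. True}"
    unfolding sem.simps(12) X_sem Id1_fun by (rule par_rel_10)
  have nz: "Fract b 1 \<noteq> (0 :: 'a ratfun)" using assms by (simp add: Zero_fract_def eq_fract)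
  have key: "\<And>r. Fract b 1 * r = Fract a 1 \<longleftrightarrow> r = Fract a b"
  proof -
    fix r :: "'a ratfun"
    have "Fract a b = Fract a 1 / Fract b 1" by simp
    then show "Fract b 1 * r = Fract a 1 \<longleftrightarrow> r = Fract a b"
      using nz by (metis nonzero_mult_div_cancel_left nonzero_eq_divide_eq mult.commute)
  qed
  show ?thesis unfolding D_def sem.simps(11) s1 s2
  proof (rule set_eqI, rule iffI)
    fix z :: "'a ratfun list \<times> 'a ratfun list"
    assume "z \<in> sem DiscardOp O (sem Copy O ({([r, s], [r, Fract b 1 * s]) | r s. True} O {([r, Fract a 1], [r]) | r. True}))"
    then obtain r where "z = ([], [r])" "Fract b 1 * r = Fract a 1" by auto
    then show "z \<in> {([], [Fract a b])}" using key[THEN iffD1] by simp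
  next
    fix z :: "'a ratfun list \<times> 'a ratfun list"
    assume "z \<in> {([], [Fract a b])}"
    then have z: "z = ([], [Fract a b])" by simp
    have 0: "([], [Fract a b]) \<in> sem DiscardOp" by simp
    have 1: "([Fract a b], [Fract a b, Fract a b]) \<in> sem Copy" by simp
    have 2: "([Fract a b, Fract a b], [Fract a b, Fract a 1]) \<in> {([r, s], [r, Fract b 1 * s]) | r s. True}"
      using assms by (simp add: eq_fract mult.commute)
    have 3: "([Fract a b, Fract a 1], [Fract a b]) \<in> {([r, Fract a 1], [r]) | r. True}" by simp
    show "z \<in> sem DiscardOp O (sem Copy O ({([r, s], [r, Fract b 1 * s]) | r s. True} O {([r, Fract a 1], [r]) | r. True}))"
      unfolding z by (rule relcompI[OF 0 relcompI[OF 1 relcompI[OF 2 3]]])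
  qed
qed

theorem lemma1:
  fixes p :: "'k::field ratfun"
  shows "\<exists>c \<in> (ACirc 0 1 :: 'k circ set). sem c = {([], [p])}"
proof (cases p)
  case (Fract a b)
  then show ?thesis using D_sort[of a b] D_sem[of b a]
    by (auto simp: ACirc_def)
qed

end
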